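(* Under the standing assumptions below, $n^{-3/4}X_n^{(1)}\to0$ in probability as $n\to\infty$, where $$X_n^{(1)}=\sum_{y\in\mathbb Z}\epsilon_y\sum_{i=1}^{\eta_{n-1}(y)}\big(\xi_i^{(y)}-m\big).$$
   Context: Standing assumptions: $(\epsilon_y)_{y\in\mathbb Z}$ is a stationary sequence of $\{-1,+1\}$-valued associated random variables with $\mathbb P[\epsilon_0=\pm1]=\tfrac12$ and $\mathbb E[\epsilon_0\epsilon_y]=O(|y|^{-\alpha})$ for some $\alpha>1$. $Y$ is a simple symmetric random walk on $\mathbb Z$ with $Y_0=0$, independent of $\epsilon$. $(\xi_i^{(y)})_{i\ge1,y\in\mathbb Z}$ are i.i.d., independent of $(\epsilon,Y)$, with $\mathbb P[\xi_i^{(y)}=k]=\tfrac23(\tfrac13)^k$, $k\ge0$, mean $m=\tfrac12$. Local time: $\eta_n(y)=\sum_{k=0}^n\mathbf 1_{\{Y_k=y\}}$, $\eta_{-1}\equiv0$; empty sums are $0$. *)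

theory Defs
  imports "HOL-Probability.Probability"
begin

definition stationary_seq :: "'a measure \<Rightarrow> (int \<Rightarrow> 'a \<Rightarrow> int) \<Rightarrow> bool" where
  "stationary_seq M eps \<longleftrightarrow>
     (\<forall>k::int. distr M (PiM UNIV (\<lambda>_. count_space UNIV)) (\<lambda>\<omega> y. eps (y + k) \<omega>)
             = distr M (PiM UNIV (\<lambda>_. count_space UNIV)) (\<lambda>\<omega> y. eps y \<omega>))"

text \<open>Association (Esary--Proschan--Walkup): for every finite index set I and all
  coordinatewise nondecreasing f, g of (eps_y)_{y in I}, Cov(f, g) >= 0.  The vector
  (eps_y)_{y in I} is encoded as the function that is eps_y on I and 0 off I.\<close>
definition associated_seq :: "'a measure \<Rightarrow> (int \<Rightarrow> 'a \<Rightarrow> int) \<Rightarrow> bool" where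
  "associated_seq M eps \<longleftrightarrow>
     (\<forall>I::int set. \<forall>f g :: (int \<Rightarrow> real) \<Rightarrow> real. finite I \<longrightarrow>
        (\<forall>x z. (\<forall>i\<in>I. x i \<le> z i) \<longrightarrow> f x \<le> f z) \<longrightarrow>
        (\<forall>x z. (\<forall>i\<in>I. x i \<le> z i) \<longrightarrow> g x \<le> g z) \<longrightarrow>
        (let V = (\<lambda>\<omega> i. if i \<in> I then real_of_int (eps i \<omega>) else 0) in
          (\<integral>\<omega>. f (V \<omega>) * g (V \<omega>) \<partial>M)
            - (\<integral>\<omega>. f (V \<omega>) \<partial>M) * (\<integral>\<omega>. g (V \<omega>) \<partial>M) \<ge> 0))"

text \<open>Local time before time n: eta_{n-1}(y) = #{k \<le> n-1 : Y_k = y}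
  (equal to 0 for n = 0, matching eta_{-1} = 0).\<close>
definition loc_time_before :: "(nat \<Rightarrow> 'a \<Rightarrow> int) \<Rightarrow> nat \<Rightarrow> int \<Rightarrow> 'a \<Rightarrow> nat" where
  "loc_time_before Y n y \<omega> = card {k. k < n \<and> Y k \<omega> = y}"

text \<open>Only sites
  y visited before time n contribute (other summands are empty sums), so the sum is taken over
  that finite set of sites.\<close>
definition X1 :: "(int \<Rightarrow> 'a \<Rightarrow> int) \<Rightarrow> (nat \<Rightarrow> 'a \<Rightarrow> int) \<Rightarrow> (nat \<Rightarrow> int \<Rightarrow> 'a \<Rightarrow> nat)
                  \<Rightarrow> real \<Rightarrow> nat \<Rightarrow> 'a \<Rightarrow> real" where
  "X1 eps Y xi m n \<omega> =
     (\<Sum>y\<in>(\<lambda>k. Y k \<omega>) ` {..<n}.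
        real_of_int (eps y \<omega>) * (\<Sum>i=1..loc_time_before Y n y \<omega>. (real (xi i y \<omega>) - m)))"

end

theory Submission
  imports Defs
begin

lemma indep_integral_mult:
  fixes U V :: "'a \<Rightarrow> real"
  assumes P: "prob_space M"
  and U: "U \<in> borel_measurable M" and V: "V \<in> borel_measurable M"
  and FU: "\<And>B. B \<in> sets borel \<Longrightarrow> U -` B \<inter> space M \<in> FA"
  and FV: "\<And>B. B \<in> sets borel \<Longrightarrow> V -` B \<inter> space M \<in> FB"
  and prod: "\<And>a b. a \<in> FA \<Longrightarrow> b \<in> FB \<Longrightarrow> measure M (a \<inter> b) = measure M a * measure M b"
  and iU: "integrable M U" and iV: "integrable M V"
  shows "integrable M (\<lambda>\<omega>. U \<omega> * V \<omega>) \<and> (\<integral>\<omega>. U \<omega> * V \<omega> \<partial>M) = (\<integral>\<omega>. U \<omega> \<partial>M) * (\<integral>\<omega>. V \<omega> \<partial>M)"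
proof -
  interpret prob_space M by (rule P)
  let ?Pa = "{U -` A \<inter> space M | A. A \<in> sets borel}"
  let ?Pb = "{V -` A \<inter> space M | A. A \<in> sets borel}"
  have "indep_set ?Pa ?Pb"
    unfolding indep_sets2_eq using U V FU FV prod by (auto simp: measurable_sets)
  hence "indep_sets (\<lambda>i. {case_bool U V i -` A \<inter> space M | A. A \<in> sets (case_bool borel borel i)}) UNIV"
    unfolding indep_set_def by (rule indep_sets_mono_sets) (auto split: bool.split)
  hence "indep_var borel U borel V"
    unfolding indep_var_def indep_vars_def2 using U V by (auto split: bool.split)
  thus ?thesis using indep_var_lebesgue_integral indep_var_integrable iU iV by blast
qed

lemma geo_distr:
  fixes X :: "'a \<Rightarrow> nat"
  assumes P: "prob_space M" and X: "X \<in> measurable M (count_space UNIV)"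
  and law: "\<And>k. measure M {\<omega> \<in> space M. X \<omega> = k} = 2/3 * (1/3) ^ k"
  shows "distr M (count_space UNIV) X = measure_pmf (geometric_pmf (2/3))"
proof (rule measure_eqI_countable[where A=UNIV])
  interpret prob_space M by (rule P)
  fix a :: nat
  have "emeasure (distr M (count_space UNIV) X) {a} = emeasure M (X -` {a} \<inter> space M)"
    using X by (simp add: emeasure_distr)
  also have "X -` {a} \<inter> space M = {\<omega> \<in> space M. X \<omega> = a}" by auto
  also have "emeasure M {\<omega> \<in> space M. X \<omega> = a} = ennreal (2/3 * (1/3) ^ a)"
    using law[of a] by (simp add: emeasure_eq_measure)
  also have "\<dots> = emeasure (measure_pmf (geometric_pmf (2/3))) {a}"
    by (simp add: emeasure_pmf_single mult.commute)
  finally show "emeasure (distr M (count_space UNIV) X) {a} = emeasure (measure_pmf (geometric_pmf (2/3))) {a}" .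
qed auto

lemma sq_bound: "(real k - 1/2)^2 \<le> 4 * 2^k"
proof -
  have "real k * real k \<le> 2 * 2^k"
  proof (induction k)
    case (Suc k)
    have "real k + 1 \<le> 2^k" using less_exp[of k]
      by (metis Suc_leI of_nat_Suc of_nat_le_iff of_nat_numeral of_nat_power add.commute)
    then show ?case using Suc by (simp add: algebra_simps)
  qed simp
  moreover have "real k \<le> 2^k" using less_exp[of k]
    by (metis less_imp_le of_nat_le_iff of_nat_numeral of_nat_power)
  moreover have "(1::real) \<le> 2^k" by simp
  moreover have "(real k - 1/2)^2 = real k * real k - real k + 1/4" by (simp add: power2_eq_square algebra_simps)
  ultimately show ?thesis by linarith
qed

definition Cgeo :: real where
  "Cgeo = measure_pmf.expectation (geometric_pmf (2/3)) (\<lambda>k. (real k - 1/2)^2)"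

lemma geo_int:
  "integrable (measure_pmf (geometric_pmf (2/3))) (\<lambda>k. (real k - 1/2)^2)"
proof -
  have s: "summable (\<lambda>k. 8/3 * (2/3::real)^k)"
    by (intro summable_mult summable_geometric) auto
  have "summable (\<lambda>k. norm (pmf (geometric_pmf (2/3)) k * (real k - 1/2)^2))"
  proof (rule summable_comparison_test'[OF s, where N=0])
    fix k :: nat
    have "norm (norm (pmf (geometric_pmf (2/3)) k * (real k - 1/2)^2)) = (1/3)^k * (2/3) * (real k - 1/2)^2"
      by simp
    also have "\<dots> \<le> (1/3)^k * (2/3) * (4 * 2^k)"
      by (intro mult_left_mono sq_bound) auto
    also have "\<dots> = 8/3 * (2/3)^k" by (simp add: power_divide field_simps)
    finally show "norm (norm (pmf (geometric_pmf (2/3)) k * (real k - 1/2)^2)) \<le> 8/3 * (2/3)^k" .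
  qed
  then show ?thesis
    unfolding measure_pmf_eq_density
    by (subst integrable_density) (auto simp: integrable_count_space_nat_iff)
qed

lemma geo_facts:
  fixes X :: "'a \<Rightarrow> nat"
  assumes P: "prob_space M" and X: "X \<in> measurable M (count_space UNIV)"
  and law: "\<And>k. measure M {\<omega> \<in> space M. X \<omega> = k} = 2/3 * (1/3) ^ k"
  shows "integrable M (\<lambda>\<omega>. real (X \<omega>) - 1/2)" "(\<integral>\<omega>. real (X \<omega>) - 1/2 \<partial>M) = 0"
    "integrable M (\<lambda>\<omega>. (real (X \<omega>) - 1/2)^2)" "(\<integral>\<omega>. (real (X \<omega>) - 1/2)^2 \<partial>M) = Cgeo"
proof -
  interpret prob_space M by (rule P)
  note D = geo_distr[OF P X law]
  have ir: "integrable (measure_pmf (geometric_pmf (2/3))) (\<lambda>k. real k - 1/2)"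
    using integrable_real_geometric_pmf[of "2/3"] by auto
  show "integrable M (\<lambda>\<omega>. real (X \<omega>) - 1/2)"
    using ir unfolding D[symmetric] by (subst (asm) integrable_distr_eq[OF X]) auto
  have "(\<integral>\<omega>. real (X \<omega>) - 1/2 \<partial>M) = measure_pmf.expectation (geometric_pmf (2/3)) (\<lambda>k. real k - 1/2)"
    unfolding D[symmetric] by (subst integral_distr[OF X]) auto
  also have "\<dots> = measure_pmf.expectation (geometric_pmf (2/3)) real - 1/2"
    using integrable_real_geometric_pmf[of "2/3"]
    by (subst Bochner_Integration.integral_diff) (auto simp: measure_pmf.prob_space)
  also have "\<dots> = 0" using expectation_geometric_pmf[of "2/3"] by simp
  finally show "(\<integral>\<omega>. real (X \<omega>) - 1/2 \<partial>M) = 0" .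
  show "integrable M (\<lambda>\<omega>. (real (X \<omega>) - 1/2)^2)"
    using geo_int unfolding D[symmetric] by (subst (asm) integrable_distr_eq[OF X]) auto
  show "(\<integral>\<omega>. (real (X \<omega>) - 1/2)^2 \<partial>M) = Cgeo"
    unfolding Cgeo_def D[symmetric] by (subst integral_distr[OF X]) auto
qed

lemma Cgeo_nonneg: "Cgeo \<ge> 0"
  unfolding Cgeo_def by (rule integral_nonneg_AE) auto

lemma X1_rewrite:
  fixes n :: nat
  assumes bound: "\<And>k. k < n \<Longrightarrow> \<bar>Y k \<omega>\<bar> \<le> int n"
  shows "X1 eps Y xi m n \<omega> = (\<Sum>p\<in>{-int n..int n} \<times> {1..n}.
     (real_of_int (eps (fst p) \<omega>) * (if real (snd p) \<le> real (loc_time_before Y n (fst p) \<omega>) then 1 else 0))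
       * (real (xi (snd p) (fst p) \<omega>) - m))"
proof -
  define \<eta> where "\<eta> y = loc_time_before Y n y \<omega>" for y
  define f where "f y i = real (xi i y \<omega>) - m" for y i
  have le: "\<eta> y \<le> n" for y
  proof -
    have "\<eta> y \<le> card {..<n}" unfolding \<eta>_def loc_time_before_def
      by (rule card_mono) auto
    then show ?thesis by simp
  qed
  have inner: "(\<Sum>i=1..\<eta> y. f y i) = (\<Sum>i\<in>{1..n}. (if real i \<le> real (\<eta> y) then 1 else 0) * f y i)" for y
  proof -
    have "(\<Sum>i\<in>{1..n}. (if real i \<le> real (\<eta> y) then 1 else 0) * f y i)
        = (\<Sum>i\<in>{1..n}. if i \<le> \<eta> y then f y i else 0)" by (intro sum.cong) auto
    also have "\<dots> = (\<Sum>i\<in>{i \<in> {1..n}. i \<le> \<eta> y}. f y i)" by (rule sum.inter_filter[symmetric]) auto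
    also have "{i \<in> {1..n}. i \<le> \<eta> y} = {1..\<eta> y}" using le[of y] by auto
    finally show ?thesis by simp
  qed
  have img: "(\<lambda>k. Y k \<omega>) ` {..<n} \<subseteq> {-int n..int n}" using bound by force
  have "X1 eps Y xi m n \<omega> = (\<Sum>y\<in>{-int n..int n}. real_of_int (eps y \<omega>) * (\<Sum>i=1..\<eta> y. f y i))"
    unfolding X1_def \<eta>_def[symmetric] f_def[symmetric]
  proof (rule sum.mono_neutral_left[OF _ img])
    show "\<forall>y\<in>{-int n..int n} - (\<lambda>k. Y k \<omega>) ` {..<n}. real_of_int (eps y \<omega>) * (\<Sum>i = 1..\<eta> y. f y i) = 0"
    proof
      fix y assume "y \<in> {-int n..int n} - (\<lambda>k. Y k \<omega>) ` {..<n}"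
      then have "{k. k < n \<and> Y k \<omega> = y} = {}" by auto
      then have "\<eta> y = 0" unfolding \<eta>_def loc_time_before_def by simp
      then show "real_of_int (eps y \<omega>) * (\<Sum>i = 1..\<eta> y. f y i) = 0" by simp
    qed
  qed auto
  also have "\<dots> = (\<Sum>y\<in>{-int n..int n}. \<Sum>i\<in>{1..n}. (real_of_int (eps y \<omega>) * (if real i \<le> real (\<eta> y) then 1 else 0)) * f y i)"
    unfolding inner by (simp add: sum_distrib_left mult.assoc)
  also have "\<dots> = (\<Sum>p\<in>{-int n..int n} \<times> {1..n}. (real_of_int (eps (fst p) \<omega>) * (if real (snd p) \<le> real (\<eta> (fst p)) then 1 else 0)) * f (fst p) (snd p))"
    by (subst sum.cartesian_product) (simp add: case_prod_beta)
  finally show ?thesis unfolding \<eta>_def f_def .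
qed

lemma sumA_bound:
  fixes e :: "int \<Rightarrow> int" and Yw :: "nat \<Rightarrow> int" and n :: nat
  assumes pm: "\<And>y. e y \<in> {-1,1}"
  shows "(\<Sum>p\<in>{-int n..int n} \<times> {1..n}.
     (real_of_int (e (fst p)) * (if real (snd p) \<le> real (card {k. k < n \<and> Yw k = fst p}) then 1 else 0)) *
     (real_of_int (e (fst p)) * (if real (snd p) \<le> real (card {k. k < n \<and> Yw k = fst p}) then 1 else 0))) \<le> real n"
proof -
  define c where "c y = card {k. k < n \<and> Yw k = y}" for y
  have sq: "real_of_int (e y) * real_of_int (e y) = 1" for y using pm[of y] by auto
  have "(\<Sum>p\<in>{-int n..int n} \<times> {1..n}.
     (real_of_int (e (fst p)) * (if real (snd p) \<le> real (c (fst p)) then 1 else 0)) *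
     (real_of_int (e (fst p)) * (if real (snd p) \<le> real (c (fst p)) then 1 else 0)))
     = (\<Sum>y\<in>{-int n..int n}. \<Sum>i\<in>{1..n}. (if i \<le> c y then 1 else 0))"
    by (subst sum.cartesian_product) (intro sum.cong refl, auto simp: sq)
  also have "\<dots> \<le> (\<Sum>y\<in>{-int n..int n}. real (c y))"
  proof (rule sum_mono)
    fix y
    have "(\<Sum>i\<in>{1..n}. (if i \<le> c y then 1 else 0::real)) = (\<Sum>i\<in>{i\<in>{1..n}. i \<le> c y}. 1)"
      by (rule sum.inter_filter[symmetric]) auto
    also have "\<dots> = real (card {i\<in>{1..n}. i \<le> c y})" by simp
    also have "card {i\<in>{1..n}. i \<le> c y} \<le> card {1..c y}" by (rule card_mono) auto
    then have "real (card {i\<in>{1..n}. i \<le> c y}) \<le> real (c y)" by simp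
    finally show "(\<Sum>i\<in>{1..n}. (if i \<le> c y then 1 else 0::real)) \<le> real (c y)" .
  qed
  also have "\<dots> = (\<Sum>y\<in>{-int n..int n}. \<Sum>k<n. if Yw k = y then 1 else 0)"
  proof (intro sum.cong refl)
    fix y
    have "{k. k < n \<and> Yw k = y} = {k\<in>{..<n}. Yw k = y}" by auto
    then have "real (c y) = (\<Sum>k\<in>{k\<in>{..<n}. Yw k = y}. 1)" unfolding c_def by simp
    also have "\<dots> = (\<Sum>k<n. if Yw k = y then 1 else 0)" by (rule sum.inter_filter) auto
    finally show "real (c y) = (\<Sum>k<n. if Yw k = y then 1 else 0)" .
  qed
  also have "\<dots> = (\<Sum>k<n. \<Sum>y\<in>{-int n..int n}. if Yw k = y then 1 else 0)"
    by (rule sum.swap)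
  also have "\<dots> \<le> (\<Sum>k<n. 1)"
    by (intro sum_mono) (simp add: sum.delta)
  finally show ?thesis unfolding c_def by simp
qed

lemma markov_aux:
  fixes x e s :: real
  assumes "x > 0" "e > 0" "\<bar>x powr (-3/4) * s\<bar> > e"
  shows "e^2 * x powr (3/2) \<le> s^2"
proof -
  have inv: "x powr (-3/4) * x powr (3/4) = 1"
    using powr_add[of x "-3/4" "3/4"] assms(1) by simp
  have pos: "x powr (-3/4) > 0" "x powr (3/4) > 0" using assms(1) by auto
  have h1: "x powr (-3/4) * \<bar>s\<bar> > e" using assms(3) pos by (simp add: abs_mult)
  have "x powr (3/4) * (x powr (-3/4) * \<bar>s\<bar>) > x powr (3/4) * e"
    using pos h1 by (intro mult_strict_left_mono) auto
  moreover have "x powr (3/4) * (x powr (-3/4) * \<bar>s\<bar>) = \<bar>s\<bar>"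
    using inv by (metis mult.assoc mult.commute mult_1)
  ultimately have gt: "\<bar>s\<bar> > e * x powr (3/4)" by (metis mult.commute)
  have sq: "x powr (3/4) * x powr (3/4) = x powr (3/2)"
    using powr_add[of x "3/4" "3/4"] by simp
  have "e^2 * x powr (3/2) = (e * x powr (3/4))^2"
    unfolding power2_eq_square sq[symmetric] by (simp add: algebra_simps)
  also have "\<dots> \<le> \<bar>s\<bar>^2" using gt assms pos by (intro power_mono) auto
  finally show ?thesis by simp
qed

lemma card_lt_sum_real: "real (card {k. k < (n::nat) \<and> P k}) = (\<Sum>k<n. if P k then 1 else 0)"
proof -
  have "{k. k < n \<and> P k} = {k \<in> {..<n}. P k}" by auto
  then have "real (card {k. k < n \<and> P k}) = (\<Sum>k\<in>{k \<in> {..<n}. P k}. 1)" by simp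
  also have "\<dots> = (\<Sum>k<n. if P k then 1 else 0)" by (rule sum.inter_filter) auto
  finally show ?thesis .
qed

theorem lemma8:
  fixes M :: "'a measure"
    and eps :: "int \<Rightarrow> 'a \<Rightarrow> int"
    and Y :: "nat \<Rightarrow> 'a \<Rightarrow> int"
    and xi :: "nat \<Rightarrow> int \<Rightarrow> 'a \<Rightarrow> nat"
  assumes P: "prob_space M"
    and eps_rv: "\<And>y. eps y \<in> measurable M (count_space UNIV)"
    and eps_pm: "\<And>y \<omega>. \<omega> \<in> space M \<Longrightarrow> eps y \<omega> \<in> {-1, 1}"
    and eps_half: "measure M {\<omega> \<in> space M. eps 0 \<omega> = 1} = 1/2"
    and eps_stat: "stationary_seq M eps"
    and eps_assoc: "associated_seq M eps"
    and eps_cov: "\<exists>\<alpha> C. \<alpha> > 1 \<and> (\<forall>y::int. y \<noteq> 0 \<longrightarrow>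
         \<bar>\<integral>\<omega>. real_of_int (eps 0 \<omega> * eps y \<omega>) \<partial>M\<bar> \<le> C * \<bar>real_of_int y\<bar> powr (-\<alpha>))"
    and Y_rv: "\<And>k. Y k \<in> measurable M (count_space UNIV)"
    and Y0: "\<And>\<omega>. \<omega> \<in> space M \<Longrightarrow> Y 0 \<omega> = 0"
    and Y_steps_pm: "\<And>k \<omega>. \<omega> \<in> space M \<Longrightarrow> Y (Suc k) \<omega> - Y k \<omega> \<in> {-1, 1}"
    and Y_steps_half: "\<And>k. measure M {\<omega> \<in> space M. Y (Suc k) \<omega> - Y k \<omega> = 1} = 1/2"
    and Y_steps_indep: "prob_space.indep_vars M (\<lambda>_. count_space UNIV)
                          (\<lambda>k \<omega>. Y (Suc k) \<omega> - Y k \<omega>) UNIV"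
    and xi_rv: "\<And>i y. xi i y \<in> measurable M (count_space UNIV)"
    and xi_indep: "prob_space.indep_vars M (\<lambda>_. count_space UNIV)
                     (\<lambda>(i, y) \<omega>. xi i y \<omega>) ({1..} \<times> UNIV)"
    and xi_law: "\<And>i y k. i \<ge> 1 \<Longrightarrow>
                   measure M {\<omega> \<in> space M. xi i y \<omega> = k} = 2/3 * (1/3) ^ k"
    and indep_three: "prob_space.indep_sets M
         (\<lambda>j::nat. if j = 0 then sets (vimage_algebra (space M) (\<lambda>\<omega> y. eps y \<omega>)
                                       (PiM UNIV (\<lambda>_. count_space UNIV)))
                else if j = 1 then sets (vimage_algebra (space M) (\<lambda>\<omega> k. Y k \<omega>)
                                       (PiM UNIV (\<lambda>_. count_space UNIV)))
                else sets (vimage_algebra (space M) (\<lambda>\<omega>. restrict (\<lambda>i y. xi i y \<omega>) {1..})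
                                       (PiM {1..} (\<lambda>_. PiM UNIV (\<lambda>_. count_space UNIV)))))
         {0, 1, 2}"
  shows "\<forall>e>0. (\<lambda>n. measure M {\<omega> \<in> space M.
            \<bar>real n powr (-3/4) * X1 eps Y xi (1/2) n \<omega>\<bar> > e}) \<longlonglongrightarrow> 0"
proof -
  interpret prob_space M by (rule P)
  define PP where "PP = PiM (UNIV::int set) (\<lambda>_. count_space (UNIV::int set))"
  define PY where "PY = PiM (UNIV::nat set) (\<lambda>_. count_space (UNIV::int set))"
  define PX where "PX = PiM ({1..}::nat set) (\<lambda>_. PiM (UNIV::int set) (\<lambda>_. count_space (UNIV::nat set)))"
  define Me where "Me = vimage_algebra (space M) (\<lambda>\<omega> y. eps y \<omega>) PP"
  define MY where "MY = vimage_algebra (space M) (\<lambda>\<omega> k. Y k \<omega>) PY"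
  define Mx where "Mx = vimage_algebra (space M) (\<lambda>\<omega>. restrict (\<lambda>i y. xi i y \<omega>) {1..}) PX"
  define F where "F = (\<lambda>j::nat. if j = 0 then sets Me else if j = 1 then sets MY else sets Mx)"
  have I3: "indep_sets F {0,1,2}"
    using indep_three unfolding F_def Me_def MY_def Mx_def PP_def PY_def PX_def by simp
  define Ix where "Ix = (\<lambda>j::nat. if j = 0 then {0,1} else {2::nat})"
  have "indep_sets (\<lambda>j. sigma_sets (space M) (\<Union>i\<in>Ix j. F i)) {0,1::nat}"
  proof (rule indep_sets_collect_sigma)
    have "(\<Union>j\<in>{0,1::nat}. Ix j) = {0,1,2}" by (auto simp: Ix_def)
    then show "indep_sets F (\<Union>j\<in>{0,1::nat}. Ix j)" using I3 by simp
    show "Int_stable (F i)" for i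
      unfolding Int_stable_def F_def by auto
    show "disjoint_family_on Ix {0,1}"
      unfolding disjoint_family_on_def Ix_def by auto
  qed
  moreover have "(\<Union>i\<in>Ix 0. F i) = sets Me \<union> sets MY" "(\<Union>i\<in>Ix 1. F i) = sets Mx"
    by (auto simp: Ix_def F_def)
  ultimately have I2: "indep_sets (\<lambda>j. sigma_sets (space M) (if j = 0 then sets Me \<union> sets MY else sets Mx)) {0,1::nat}"
    by (rule_tac indep_sets_cong[THEN iffD1]) auto
  define G0 where "G0 = sigma_sets (space M) (sets Me \<union> sets MY)"
  define G1 where "G1 = sigma_sets (space M) (sets Mx)"
  have prod01: "measure M (a \<inter> b) = measure M a * measure M b" if "a \<in> G0" "b \<in> G1" for a b
    using indep_setsD[OF I2, of "{0,1}" "\<lambda>j. if j = 0 then a else b"] that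
    unfolding G0_def G1_def by (auto simp: Int_commute)
  have spMe[simp]: "space Me = space M" "space MY = space M" "space Mx = space M"
    by (simp_all add: Me_def MY_def Mx_def)
  define NG where "NG = sigma (space M) (sets Me \<union> sets MY)"
  have sub: "sets Me \<union> sets MY \<subseteq> Pow (space M)"
    using sets.sets_into_space[of _ Me] sets.sets_into_space[of _ MY] by auto
  have setsNG: "sets NG = G0" and spNG[simp]: "space NG = space M"
    unfolding NG_def G0_def using sub by (simp_all add: sets_measure_of space_measure_of)
  have liftNG: "measurable Me N \<subseteq> measurable NG N" "measurable MY N \<subseteq> measurable NG N" for N
    by (rule measurable_mono; auto simp: setsNG G0_def)+
  have epsG[measurable]: "eps y \<in> measurable NG (count_space UNIV)" for y
  proof -
    have "(\<lambda>\<omega> y. eps y \<omega>) \<in> measurable Me PP"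
      unfolding Me_def by (rule measurable_vimage_algebra1) (auto simp: PP_def space_PiM)
    then have "(\<lambda>\<omega>. eps y \<omega>) \<in> measurable Me (count_space UNIV)"
      unfolding PP_def by measurable
    then show ?thesis using liftNG by auto
  qed
  have YG[measurable]: "Y k \<in> measurable NG (count_space UNIV)" for k
  proof -
    have "(\<lambda>\<omega> k. Y k \<omega>) \<in> measurable MY PY"
      unfolding MY_def by (rule measurable_vimage_algebra1) (auto simp: PY_def space_PiM)
    then have "(\<lambda>\<omega>. Y k \<omega>) \<in> measurable MY (count_space UNIV)"
      unfolding PY_def by measurable
    then show ?thesis using liftNG by auto
  qed
  have xiX: "xi i y \<in> measurable Mx (count_space UNIV)" if "i \<ge> 1" for i y
  proof -
    have m: "(\<lambda>\<omega>. restrict (\<lambda>i y. xi i y \<omega>) {1..}) \<in> measurable Mx PX"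
      unfolding Mx_def by (rule measurable_vimage_algebra1) (auto simp: PX_def space_PiM)
    have "(\<lambda>\<omega>. restrict (\<lambda>i y. xi i y \<omega>) {1..} i y) \<in> measurable Mx (count_space UNIV)"
    proof -
      have c1: "(\<lambda>f. f i) \<in> measurable PX (PiM (UNIV::int set) (\<lambda>_. count_space (UNIV::nat set)))"
        unfolding PX_def using that by (intro measurable_component_singleton) auto
      have c2: "(\<lambda>g. g y) \<in> measurable (PiM (UNIV::int set) (\<lambda>_. count_space (UNIV::nat set))) (count_space UNIV)"
        by (intro measurable_component_singleton) auto
      show ?thesis using measurable_compose[OF measurable_compose[OF m c1] c2] by simp
    qed
    then show ?thesis using that by simp
  qed
  have G0pre: "f -` B \<inter> space M \<in> G0" if "f \<in> borel_measurable NG" "B \<in> sets borel" for f :: "'a \<Rightarrow> real" and B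
    using measurable_sets[OF that] setsNG by simp
  have G1pre: "f -` B \<inter> space M \<in> G1" if "f \<in> borel_measurable Mx" "B \<in> sets borel" for f :: "'a \<Rightarrow> real" and B
    using measurable_sets[OF that] unfolding G1_def by (auto intro: sigma_sets.Basic)
  define D where "D = (\<lambda>(p::int\<times>nat) \<omega>. real (xi (snd p) (fst p) \<omega>) - 1/2)"
  have DX: "D p \<in> borel_measurable Mx" if "snd p \<ge> 1" for p
    unfolding D_def by (rule measurable_compose[OF xiX[OF that, of "fst p"]]) simp
  have DM[measurable]: "D p \<in> borel_measurable M" for p
    unfolding D_def by (rule measurable_compose[OF xi_rv]) simp
  have Dfacts: "integrable M (D p)" "(\<integral>\<omega>. D p \<omega> \<partial>M) = 0"
      "integrable M (\<lambda>\<omega>. D p \<omega> * D p \<omega>)" "(\<integral>\<omega>. D p \<omega> * D p \<omega> \<partial>M) = Cgeo"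
    if "snd p \<ge> 1" for p
    using geo_facts[OF P xi_rv xi_law[OF that], of "fst p"] unfolding D_def
    by (simp_all add: case_prod_beta power2_eq_square)
  have xiI: "indep_sets (\<lambda>k. {(\<lambda>(i, y) \<omega>. xi i y \<omega>) k -` A \<inter> space M | A. A \<in> sets (count_space UNIV)}) ({1..} \<times> UNIV)"
    using xi_indep unfolding indep_vars_def2 by simp
  have Dpair: "integrable M (\<lambda>\<omega>. D p \<omega> * D q \<omega>) \<and> (\<integral>\<omega>. D p \<omega> * D q \<omega> \<partial>M) = 0"
    if "p \<noteq> q" "snd p \<ge> 1" "snd q \<ge> 1" for p q
  proof -
    obtain y i where p: "p = (y,i)" by (cases p)
    obtain z j where q: "q = (z,j)" by (cases q)
    let ?Fam = "\<lambda>k. {(\<lambda>(i, y) \<omega>. xi i y \<omega>) k -` A \<inter> space M | A. A \<in> sets (count_space (UNIV::nat set))}"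
    have ne: "(i,y) \<noteq> (j,z)" using that p q by auto
    have pr: "measure M (a \<inter> b) = measure M a * measure M b" if "a \<in> ?Fam (i,y)" "b \<in> ?Fam (j,z)" for a b
    proof -
      have "prob (\<Inter>k\<in>{(i,y),(j,z)}. (if k = (i,y) then a else b)) = (\<Prod>k\<in>{(i,y),(j,z)}. prob (if k = (i,y) then a else b))"
        by (rule indep_setsD[OF xiI]) (use that ne \<open>snd p \<ge> 1\<close> \<open>snd q \<ge> 1\<close> p q in auto)
      moreover have ne': "\<not> (j = i \<and> z = y)" using ne by auto
      ultimately show ?thesis using ne by (simp add: ne' Int_commute)
    qed
    have pre1: "D p -` B \<inter> space M \<in> ?Fam (i,y)" for B
    proof -
      have "D p -` B \<inter> space M = (\<lambda>(i, y) \<omega>. xi i y \<omega>) (i,y) -` {k. real k - 1/2 \<in> B} \<inter> space M"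
        unfolding D_def p by auto
      then show ?thesis by (intro CollectI exI[where x="{k. real k - 1/2 \<in> B}"]) simp
    qed
    have pre2: "D q -` B \<inter> space M \<in> ?Fam (j,z)" for B
    proof -
      have "D q -` B \<inter> space M = (\<lambda>(i, y) \<omega>. xi i y \<omega>) (j,z) -` {k. real k - 1/2 \<in> B} \<inter> space M"
        unfolding D_def q by auto
      then show ?thesis by (intro CollectI exI[where x="{k. real k - 1/2 \<in> B}"]) simp
    qed
    have "integrable M (\<lambda>\<omega>. D p \<omega> * D q \<omega>) \<and> (\<integral>\<omega>. D p \<omega> * D q \<omega> \<partial>M) = (\<integral>\<omega>. D p \<omega> \<partial>M) * (\<integral>\<omega>. D q \<omega> \<partial>M)"
      by (rule indep_integral_mult[OF P DM DM pre1 pre2 pr]) (use Dfacts that in auto)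
    then show ?thesis using Dfacts that by simp
  qed
  define A where "A = (\<lambda>(n::nat) (p::int\<times>nat) \<omega>. real_of_int (eps (fst p) \<omega>) *
      (if real (snd p) \<le> real (loc_time_before Y n (fst p) \<omega>) then 1 else 0))"
  have locG[measurable]: "(\<lambda>\<omega>. real (loc_time_before Y n y \<omega>)) \<in> borel_measurable NG" for n y
    unfolding loc_time_before_def card_lt_sum_real by measurable
  have locM[measurable]: "(\<lambda>\<omega>. real (loc_time_before Y n y \<omega>)) \<in> borel_measurable M" for n y
    unfolding loc_time_before_def card_lt_sum_real using Y_rv by measurable
  have ANG: "(\<lambda>\<omega>. A n p \<omega> * A n q \<omega>) \<in> borel_measurable NG" for n p q
    unfolding A_def by measurable
  have AM[measurable]: "A n p \<in> borel_measurable M" for n p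
    unfolding A_def using eps_rv by measurable
  have Abd: "\<bar>A n p \<omega>\<bar> \<le> 1" if "\<omega> \<in> space M" for n p \<omega>
  proof -
    have e1: "\<bar>real_of_int (eps (fst p) \<omega>)\<bar> = 1" using eps_pm[OF that, of "fst p"] by auto
    show ?thesis unfolding A_def abs_mult e1 by simp
  qed
  have AAint: "integrable M (\<lambda>\<omega>. A n p \<omega> * A n q \<omega>)" for n p q
  proof (rule integrable_const_bound[where B=1])
    have "norm (A n p \<omega> * A n q \<omega>) \<le> 1" if "\<omega> \<in> space M" for \<omega>
    proof -
      have "\<bar>A n p \<omega>\<bar> * \<bar>A n q \<omega>\<bar> \<le> 1 * 1"
        by (rule mult_mono) (use Abd[OF that] in auto)
      then show ?thesis by (simp add: abs_mult)
    qed
    then show "AE \<omega> in M. norm (A n p \<omega> * A n q \<omega>) \<le> 1" by (intro AE_I2)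
    show "(\<lambda>\<omega>. A n p \<omega> * A n q \<omega>) \<in> borel_measurable M" by measurable
  qed
  have K1: "integrable M (\<lambda>\<omega>. (A n p \<omega> * A n q \<omega>) * (D p \<omega> * D q \<omega>)) \<and>
      (\<integral>\<omega>. (A n p \<omega> * A n q \<omega>) * (D p \<omega> * D q \<omega>) \<partial>M) =
      (\<integral>\<omega>. A n p \<omega> * A n q \<omega> \<partial>M) * (\<integral>\<omega>. D p \<omega> * D q \<omega> \<partial>M)"
    if "snd p \<ge> 1" "snd q \<ge> 1" for n p q
  proof (rule indep_integral_mult[OF P _ _ G0pre[OF ANG] G1pre prod01])
    show "(\<lambda>\<omega>. D p \<omega> * D q \<omega>) \<in> borel_measurable Mx" using DX that by measurable
    show "integrable M (\<lambda>\<omega>. D p \<omega> * D q \<omega>)" using Dfacts Dpair that by (cases "p = q") auto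
  qed (auto simp: AAint)
  have Ybd: "\<bar>Y k \<omega>\<bar> \<le> int k" if "\<omega> \<in> space M" for k \<omega>
  proof (induction k)
    case 0 then show ?case using Y0[OF that] by simp
  next
    case (Suc k) then show ?case using Y_steps_pm[OF that, of k] by auto
  qed
  define Pn where "Pn n = {-int n..int n} \<times> {1..n}" for n :: nat
  define S where "S n \<omega> = (\<Sum>p\<in>Pn n. A n p \<omega> * D p \<omega>)" for n \<omega>
  have X1S: "X1 eps Y xi (1/2) n \<omega> = S n \<omega>" if "\<omega> \<in> space M" for n \<omega>
  proof -
    have "\<bar>Y k \<omega>\<bar> \<le> int n" if "k < n" for k using Ybd[OF \<open>\<omega> \<in> space M\<close>, of k] that by linarith
    from X1_rewrite[of n Y \<omega> eps xi "1/2", OF this] show ?thesis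
      unfolding S_def Pn_def A_def D_def by simp
  qed
  have SM[measurable]: "S n \<in> borel_measurable M" for n unfolding S_def by measurable
  have mem: "snd p \<ge> 1" if "p \<in> Pn n" for p n using that unfolding Pn_def by auto
  have finP: "finite (Pn n)" for n unfolding Pn_def by simp
  have sqS: "(S n \<omega>)^2 = (\<Sum>p\<in>Pn n. \<Sum>q\<in>Pn n. (A n p \<omega> * A n q \<omega>) * (D p \<omega> * D q \<omega>))" for n \<omega>
    unfolding S_def power2_eq_square sum_product by (intro sum.cong refl) (simp add: mult_ac)
  have Kint: "integrable M (\<lambda>\<omega>. (A n p \<omega> * A n q \<omega>) * (D p \<omega> * D q \<omega>))"
    if "p \<in> Pn n" "q \<in> Pn n" for n p q
    using K1[OF mem[OF that(1)] mem[OF that(2)], of n] by (rule conjunct1)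
  have intS: "integrable M (\<lambda>\<omega>. (S n \<omega>)^2)" for n
    unfolding sqS
    apply (rule Bochner_Integration.integrable_sum)
    apply (rule Bochner_Integration.integrable_sum)
    apply (rule Kint)
     apply assumption+
    done
  have ES: "(\<integral>\<omega>. (S n \<omega>)^2 \<partial>M) = Cgeo * (\<integral>\<omega>. (\<Sum>p\<in>Pn n. A n p \<omega> * A n p \<omega>) \<partial>M)" for n
  proof -
    have "(\<integral>\<omega>. (S n \<omega>)^2 \<partial>M) = (\<Sum>p\<in>Pn n. \<Sum>q\<in>Pn n. \<integral>\<omega>. (A n p \<omega> * A n q \<omega>) * (D p \<omega> * D q \<omega>) \<partial>M)"
      unfolding sqS
    proof -
      have "(\<integral>\<omega>. (\<Sum>p\<in>Pn n. \<Sum>q\<in>Pn n. (A n p \<omega> * A n q \<omega>) * (D p \<omega> * D q \<omega>)) \<partial>M)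
          = (\<Sum>p\<in>Pn n. \<integral>\<omega>. (\<Sum>q\<in>Pn n. (A n p \<omega> * A n q \<omega>) * (D p \<omega> * D q \<omega>)) \<partial>M)"
        apply (rule Bochner_Integration.integral_sum)
        apply (rule Bochner_Integration.integrable_sum)
        apply (rule Kint)
         apply assumption+
        done
      also have "\<dots> = (\<Sum>p\<in>Pn n. \<Sum>q\<in>Pn n. \<integral>\<omega>. (A n p \<omega> * A n q \<omega>) * (D p \<omega> * D q \<omega>) \<partial>M)"
        apply (intro sum.cong refl)
        apply (rule Bochner_Integration.integral_sum)
        apply (rule Kint)
         apply assumption+
        done
      finally show "(\<integral>\<omega>. (\<Sum>p\<in>Pn n. \<Sum>q\<in>Pn n. (A n p \<omega> * A n q \<omega>) * (D p \<omega> * D q \<omega>)) \<partial>M)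
          = (\<Sum>p\<in>Pn n. \<Sum>q\<in>Pn n. \<integral>\<omega>. (A n p \<omega> * A n q \<omega>) * (D p \<omega> * D q \<omega>) \<partial>M)" .
    qed
    also have "\<dots> = (\<Sum>p\<in>Pn n. \<Sum>q\<in>Pn n. if q = p then (\<integral>\<omega>. A n p \<omega> * A n p \<omega> \<partial>M) * Cgeo else 0)"
    proof (intro sum.cong refl)
      fix p q assume pq: "p \<in> Pn n" "q \<in> Pn n"
      show "(\<integral>\<omega>. (A n p \<omega> * A n q \<omega>) * (D p \<omega> * D q \<omega>) \<partial>M) = (if q = p then (\<integral>\<omega>. A n p \<omega> * A n p \<omega> \<partial>M) * Cgeo else 0)"
        using K1[OF mem[OF pq(1)] mem[OF pq(2)], of n] Dfacts(4)[OF mem[OF pq(1)]]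
          Dpair[of p q, OF _ mem[OF pq(1)] mem[OF pq(2)]]
        by (cases "q = p") auto
    qed
    also have "\<dots> = (\<Sum>p\<in>Pn n. (\<integral>\<omega>. A n p \<omega> * A n p \<omega> \<partial>M) * Cgeo)"
      using finP by (simp add: sum.delta)
    also have "\<dots> = Cgeo * (\<integral>\<omega>. (\<Sum>p\<in>Pn n. A n p \<omega> * A n p \<omega>) \<partial>M)"
      by (subst Bochner_Integration.integral_sum) (auto simp: AAint sum_distrib_left mult.commute)
    finally show ?thesis .
  qed
  have bndA: "(\<Sum>p\<in>Pn n. A n p \<omega> * A n p \<omega>) \<le> real n" if "\<omega> \<in> space M" for n \<omega>
    unfolding Pn_def A_def loc_time_before_def
    by (rule sumA_bound) (use eps_pm[OF that] in auto)
  have ES_le: "(\<integral>\<omega>. (S n \<omega>)^2 \<partial>M) \<le> Cgeo * real n" for n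
  proof -
    have "(\<integral>\<omega>. (\<Sum>p\<in>Pn n. A n p \<omega> * A n p \<omega>) \<partial>M) \<le> (\<integral>\<omega>. real n \<partial>M)"
      by (rule integral_mono) (auto simp: AAint bndA)
    also have "\<dots> = real n" by (simp add: prob_space)
    finally show ?thesis unfolding ES using Cgeo_nonneg by (intro mult_left_mono) auto
  qed
  show ?thesis
  proof (intro allI impI)
    fix e :: real assume e: "e > 0"
    define B where "B n = Cgeo / e^2 * real n powr (-1/2)" for n :: nat
    have lim: "B \<longlonglongrightarrow> 0" unfolding B_def
      by (intro tendsto_mult_right_zero tendsto_neg_powr filterlim_real_sequentially) auto
    have ev: "eventually (\<lambda>n. measure M {\<omega> \<in> space M. \<bar>real n powr (-3/4) * X1 eps Y xi (1/2) n \<omega>\<bar> > e} \<le> B n) sequentially"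
      using eventually_ge_at_top[of "1::nat"]
    proof eventually_elim
      case (elim n)
      then have npos: "real n > 0" by simp
      define c where "c = e^2 * real n powr (3/2)"
      have cpos: "c > 0" unfolding c_def using e npos by auto
      have "measure M {\<omega> \<in> space M. \<bar>real n powr (-3/4) * X1 eps Y xi (1/2) n \<omega>\<bar> > e}
          \<le> measure M {\<omega> \<in> space M. (S n \<omega>)^2 \<ge> c}"
      proof (rule finite_measure_mono)
        show "{\<omega> \<in> space M. e < \<bar>real n powr (- 3 / 4) * X1 eps Y xi (1 / 2) n \<omega>\<bar>} \<subseteq> {\<omega> \<in> space M. c \<le> (S n \<omega>)\<^sup>2}"
          using markov_aux[OF npos e] X1S unfolding c_def by auto
        show "{\<omega> \<in> space M. c \<le> (S n \<omega>)\<^sup>2} \<in> sets M" by measurable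
      qed
      also have "\<dots> \<le> (\<integral>\<omega>. (S n \<omega>)^2 \<partial>M) / c"
        by (rule integral_Markov_inequality_measure[OF intS _ _ cpos]) auto
      also have "\<dots> \<le> Cgeo * real n / c"
        using ES_le cpos by (intro divide_right_mono) auto
      also have "\<dots> = B n"
      proof -
        have "real n powr (-1/2) = real n powr 1 / real n powr (3/2)"
          by (subst powr_diff[symmetric]) auto
        then show ?thesis unfolding B_def c_def using npos e by (simp add: field_simps)
      qed
      finally show ?case .
    qed
    show "(\<lambda>n. measure M {\<omega> \<in> space M. \<bar>real n powr (-3/4) * X1 eps Y xi (1/2) n \<omega>\<bar> > e}) \<longlonglongrightarrow> 0"
      by (rule tendsto_sandwich[OF _ ev tendsto_const lim]) auto
  qed
qed

end
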